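(* For every $w\in S_n$, the quotient groups $\mathfrak{ut}_n/\mathfrak{ut}_{w^{-1}}$ and $\mathfrak{ut}_n/\mathfrak{ut}_w$ are isomorphic.
   Context: Let $q$ be a prime power and $\mathfrak{ut}_n$ the additive group of strictly upper triangular $n\times n$ matrices over $\mathbb{F}_q$. For $w\in S_n$ (one-line notation), $\iota_k(w)=\#\{i<w^{-1}(k):w(i)>k\}$ and $\mathfrak{ut}_w=\{x\in\mathfrak{ut}_n:x_{ij}\ne0\Rightarrow0<j-i\le\iota_i(w)\}$, a subgroup of $\mathfrak{ut}_n$. *)

theory Defs
  imports "HOL-Algebra.Coset" "HOL-Combinatorics.Permutations"
begin

text \<open>n x n matrices over a field are encoded as functions nat => nat => 'a,
  with row/column indices 1..n (entries outside are zero for members of ut_n).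
  Permutations w in S_n are functions nat => nat with  w permutes {1..n}
  (one-line notation: w i is the i-th entry).\<close>

type_synonym 'a mat = "nat \<Rightarrow> nat \<Rightarrow> 'a"

definition iota :: "(nat \<Rightarrow> nat) \<Rightarrow> nat \<Rightarrow> nat" where
  "iota w k = card {i. 1 \<le> i \<and> i < Hilbert_Choice.inv w k \<and> w i > k}"

definition ut_carrier :: "nat \<Rightarrow> ('a::zero) mat set" where
  "ut_carrier n = {x. \<forall>i j. x i j \<noteq> 0 \<longrightarrow> 1 \<le> i \<and> i < j \<and> j \<le> n}"

definition ut_grp :: "nat \<Rightarrow> ('a::{field,finite}) mat monoid" where
  "ut_grp n = \<lparr>carrier = ut_carrier n,
               monoid.mult = (\<lambda>x y i j. x i j + y i j),
               one = (\<lambda>i j. 0)\<rparr>"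

definition ut_w :: "nat \<Rightarrow> (nat \<Rightarrow> nat) \<Rightarrow> ('a::zero) mat set" where
  "ut_w n w = {x \<in> ut_carrier n. \<forall>i j. x i j \<noteq> 0 \<longrightarrow> 0 < j - i \<and> j - i \<le> iota w i}"

end

theory Submission imports Defs begin

lemma ut_carrier_add:
  fixes x y :: "('a::{field,finite}) mat"
  assumes x: "x \<in> ut_carrier n" and y: "y \<in> ut_carrier n"
  shows "(\<lambda>i j. x i j + y i j) \<in> ut_carrier n"
  unfolding ut_carrier_def
proof (intro CollectI allI impI)
  fix i j assume "x i j + y i j \<noteq> (0::'a)"
  hence "x i j \<noteq> 0 \<or> y i j \<noteq> 0" by auto
  thus "1 \<le> i \<and> i < j \<and> j \<le> n" using x y unfolding ut_carrier_def by blast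
qed

lemma ut_comm_group: "comm_group (ut_grp n :: ('a::{field,finite}) mat monoid)"
proof (rule comm_groupI)
  fix x assume x: "x \<in> carrier (ut_grp n :: 'a mat monoid)"
  have "(\<lambda>i j. - x i j) \<in> ut_carrier n" using x by (simp add: ut_grp_def ut_carrier_def)
  thus "\<exists>y\<in>carrier (ut_grp n). y \<otimes>\<^bsub>ut_grp n\<^esub> x = \<one>\<^bsub>ut_grp n\<^esub>"
    by (intro bexI[of _ "\<lambda>i j. - x i j"]) (simp_all add: ut_grp_def)
next
  fix x y assume "x \<in> carrier (ut_grp n :: 'a mat monoid)" "y \<in> carrier (ut_grp n :: 'a mat monoid)"
  thus "x \<otimes>\<^bsub>ut_grp n\<^esub> y \<in> carrier (ut_grp n)" by (simp add: ut_grp_def ut_carrier_add)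
next
  show "\<one>\<^bsub>ut_grp n\<^esub> \<in> carrier (ut_grp n :: 'a mat monoid)" by (simp add: ut_grp_def ut_carrier_def)
next
  fix x y z :: "'a mat"
  show "x \<otimes>\<^bsub>ut_grp n\<^esub> y \<otimes>\<^bsub>ut_grp n\<^esub> z = x \<otimes>\<^bsub>ut_grp n\<^esub> (y \<otimes>\<^bsub>ut_grp n\<^esub> z)"
    by (simp add: ut_grp_def add.assoc)
next
  fix x y :: "'a mat"
  show "x \<otimes>\<^bsub>ut_grp n\<^esub> y = y \<otimes>\<^bsub>ut_grp n\<^esub> x" by (simp add: ut_grp_def add.commute)
next
  fix x :: "'a mat"
  show "\<one>\<^bsub>ut_grp n\<^esub> \<otimes>\<^bsub>ut_grp n\<^esub> x = x" by (simp add: ut_grp_def)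
qed

lemma ut_inv: "x \<in> carrier (ut_grp n :: ('a::{field,finite}) mat monoid) \<Longrightarrow> inv\<^bsub>ut_grp n\<^esub> x = (\<lambda>i j. - x i j)"
proof -
  assume x: "x \<in> carrier (ut_grp n :: 'a mat monoid)"
  interpret comm_group "ut_grp n :: 'a mat monoid" by (rule ut_comm_group)
  show ?thesis
    by (rule inv_equality) (use x in \<open>auto simp: ut_grp_def ut_carrier_def\<close>)
qed

definition supp :: "('a::zero) mat \<Rightarrow> (nat \<times> nat) set" where
  "supp x = {(i,j). x i j \<noteq> 0}"

definition Sw :: "nat \<Rightarrow> (nat \<Rightarrow> nat) \<Rightarrow> (nat \<times> nat) set" where
  "Sw n w = {(i,j). 1 \<le> i \<and> i < j \<and> j \<le> n \<and> j - i \<le> iota w i}"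

definition Pn :: "nat \<Rightarrow> (nat \<times> nat) set" where
  "Pn n = {(i,j). 1 \<le> i \<and> i < j \<and> j \<le> n}"

lemma ut_carrier_supp: "ut_carrier n = {x. supp x \<subseteq> Pn n}"
  unfolding ut_carrier_def supp_def Pn_def by auto

lemma ut_w_supp: "ut_w n w = {x. supp x \<subseteq> Sw n w}"
  unfolding ut_w_def ut_carrier_def supp_def Sw_def by auto

lemma ut_w_subgroup: "subgroup (ut_w n w) (ut_grp n :: ('a::{field,finite}) mat monoid)"
proof -
  interpret comm_group "ut_grp n :: 'a mat monoid" by (rule ut_comm_group)
  show ?thesis
  proof (rule subgroupI)
    show "ut_w n w \<subseteq> carrier (ut_grp n :: 'a mat monoid)"
      by (auto simp: ut_grp_def ut_w_def)
    show "ut_w n w \<noteq> {}" using ut_w_supp[of n w] by (auto simp: supp_def)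
    fix a assume a: "a \<in> (ut_w n w :: 'a mat set)"
    hence "a \<in> carrier (ut_grp n :: 'a mat monoid)" by (auto simp: ut_grp_def ut_w_def)
    thus "inv\<^bsub>ut_grp n\<^esub> a \<in> ut_w n w" using a by (simp add: ut_inv ut_w_supp supp_def)
    fix b assume b: "b \<in> (ut_w n w :: 'a mat set)"
    show "a \<otimes>\<^bsub>ut_grp n\<^esub> b \<in> ut_w n w" using a b
    proof -
      have "supp (\<lambda>i j. a i j + b i j) \<subseteq> supp a \<union> supp b" unfolding supp_def by auto
      moreover have "supp a \<subseteq> Sw n w" "supp b \<subseteq> Sw n w" using a b by (simp_all add: ut_w_supp)
      ultimately have "supp (\<lambda>i j. a i j + b i j) \<subseteq> Sw n w" by blast
      thus ?thesis by (simp add: ut_grp_def ut_w_supp)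
    qed
  qed
qed


lemma iota_le:
  assumes w: "w permutes {1..n}" and k: "k \<in> {1..n}"
  shows "iota w k \<le> n - k"
proof -
  let ?A = "{i. 1 \<le> i \<and> i < Hilbert_Choice.inv w k \<and> w i > k}"
  have ik: "Hilbert_Choice.inv w k \<in> {1..n}"
    using permutes_in_image[OF permutes_inv[OF w]] k by blast
  have "w ` ?A \<subseteq> {k<..n}"
  proof
    fix y assume "y \<in> w ` ?A"
    then obtain i where i: "i \<in> ?A" "y = w i" by blast
    have "i \<in> {1..n}" using i ik by auto
    hence "w i \<in> {1..n}" using permutes_in_image[OF w] by blast
    thus "y \<in> {k<..n}" using i by auto
  qed
  moreover have "inj_on w ?A" using permutes_inj[OF w] by (auto intro: inj_on_subset)
  ultimately have "card ?A \<le> card {k<..n}"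
    by (metis card_image card_mono finite_greaterThanAtMost)
  thus ?thesis unfolding iota_def by simp
qed

definition Inv :: "nat \<Rightarrow> (nat \<Rightarrow> nat) \<Rightarrow> (nat \<times> nat) set" where
  "Inv n w = {(i,j). 1 \<le> i \<and> i < j \<and> j \<le> n \<and> w j < w i}"

lemma card_Sw:
  assumes w: "w permutes {1..n}"
  shows "card (Sw n w) = (\<Sum>k\<in>{1..n}. iota w k)"
proof -
  have "Sw n w = Sigma {1..n} (\<lambda>k. {k<..k + iota w k})"
    using iota_le[OF w] unfolding Sw_def by fastforce
  thus ?thesis by simp
qed

lemma card_Inv:
  assumes w: "w permutes {1..n}"
  shows "card (Inv n w) = (\<Sum>k\<in>{1..n}. iota w k)"
proof -
  let ?A = "\<lambda>k. {i. 1 \<le> i \<and> i < Hilbert_Choice.inv w k \<and> w i > k}"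
  have fin1: "finite (?A k)" for k
    by (rule finite_subset[of _ "{..<Hilbert_Choice.inv w k}"]) auto
  hence fin: "\<forall>k\<in>{1..n}. finite (?A k)" by blast
  have "(\<Sum>k\<in>{1..n}. iota w k) = card (Sigma {1..n} ?A)"
    using fin by (simp add: iota_def)
  also have "\<dots> = card (Inv n w)"
  proof (rule bij_betw_same_card[of "\<lambda>(k,i). (i, Hilbert_Choice.inv w k)"],
         rule bij_betw_byWitness[where f' = "\<lambda>(i,j). (w j, i)"])
    show "\<forall>a\<in>Sigma {1..n} ?A. (\<lambda>(i, j). (w j, i)) ((\<lambda>(k, i). (i, Hilbert_Choice.inv w k)) a) = a"
      by (auto simp: permutes_inverses[OF w])
    show "\<forall>a\<in>Inv n w. (\<lambda>(k, i). (i, Hilbert_Choice.inv w k)) ((\<lambda>(i, j). (w j, i)) a) = a"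
      by (auto simp: permutes_inverses[OF w])
    have ik: "\<And>k. k \<in> {1..n} \<Longrightarrow> Hilbert_Choice.inv w k \<in> {1..n}"
      using permutes_in_image[OF permutes_inv[OF w]] by blast
    have wj: "\<And>j. j \<in> {1..n} \<Longrightarrow> w j \<in> {1..n}"
      using permutes_in_image[OF w] by blast
    show "(\<lambda>(k, i). (i, Hilbert_Choice.inv w k)) ` Sigma {1..n} ?A \<subseteq> Inv n w"
    proof
      fix p assume "p \<in> (\<lambda>(k, i). (i, Hilbert_Choice.inv w k)) ` Sigma {1..n} ?A"
      then obtain k i where ki: "k \<in> {1..n}" "i \<in> ?A k" "p = (i, Hilbert_Choice.inv w k)" by auto
      have "w (Hilbert_Choice.inv w k) = k" by (rule permutes_inverses(1)[OF w])
      thus "p \<in> Inv n w" using ik[OF ki(1)] ki(2,3) unfolding Inv_def by auto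
    qed
    show "(\<lambda>(i, j). (w j, i)) ` Inv n w \<subseteq> Sigma {1..n} ?A"
    proof
      fix p assume "p \<in> (\<lambda>(i, j). (w j, i)) ` Inv n w"
      then obtain i j where ij: "(i,j) \<in> Inv n w" "p = (w j, i)" by auto
      have "Hilbert_Choice.inv w (w j) = j" by (rule permutes_inverses(2)[OF w])
      moreover have "j \<in> {1..n}" using ij(1) unfolding Inv_def by auto
      ultimately show "p \<in> Sigma {1..n} ?A" using wj ij unfolding Inv_def by auto
    qed
  qed
  finally show ?thesis by simp
qed

lemma card_Inv_le:
  assumes w: "w permutes {1..n}"
  shows "card (Inv n w) \<le> card (Inv n (Hilbert_Choice.inv w))"
proof (rule card_inj_on_le[of "\<lambda>(i,j). (w j, w i)"])
  show "finite (Inv n (Hilbert_Choice.inv w))"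
    by (rule finite_subset[of _ "{1..n} \<times> {1..n}"]) (auto simp: Inv_def)
  show "inj_on (\<lambda>(i, j). (w j, w i)) (Inv n w)"
  proof (rule inj_onI)
    fix p q assume "p \<in> Inv n w" "q \<in> Inv n w" "(\<lambda>(i, j). (w j, w i)) p = (\<lambda>(i, j). (w j, w i)) q"
    thus "p = q" using permutes_inj[OF w] by (cases p, cases q) (simp add: inj_eq)
  qed
  show "(\<lambda>(i, j). (w j, w i)) ` Inv n w \<subseteq> Inv n (Hilbert_Choice.inv w)"
  proof
    fix p assume "p \<in> (\<lambda>(i, j). (w j, w i)) ` Inv n w"
    then obtain i j where ij0: "(i,j) \<in> Inv n w" and p: "p = (w j, w i)" by auto
    from ij0 have ij: "1 \<le> i" "i < j" "j \<le> n" "w j < w i" unfolding Inv_def by simp_all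
    have "j \<in> {1..n}" "i \<in> {1..n}" using ij by simp_all
    hence "w j \<in> {1..n}" "w i \<in> {1..n}" using permutes_in_image[OF w] by blast+
    moreover have "Hilbert_Choice.inv w (w i) = i" "Hilbert_Choice.inv w (w j) = j"
      using permutes_inverses(2)[OF w] by blast+
    ultimately show "p \<in> Inv n (Hilbert_Choice.inv w)" using ij unfolding p Inv_def by simp
  qed
qed

lemma card_Sw_inv:
  assumes w: "w permutes {1..n}"
  shows "card (Sw n (Hilbert_Choice.inv w)) = card (Sw n w)"
proof -
  have w': "Hilbert_Choice.inv w permutes {1..n}" by (rule permutes_inv[OF w])
  have "card (Inv n (Hilbert_Choice.inv w)) \<le> card (Inv n w)"
    using card_Inv_le[OF w'] permutes_inv_inv[OF w] by simp
  with card_Inv_le[OF w] have "card (Inv n (Hilbert_Choice.inv w)) = card (Inv n w)" by simp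
  thus ?thesis using card_Sw[OF w] card_Sw[OF w'] card_Inv[OF w] card_Inv[OF w'] by simp
qed


lemma exists_perm_sets:
  assumes P: "finite P" and S1: "S1 \<subseteq> P" and S2: "S2 \<subseteq> P" and c: "card S1 = card S2"
  shows "\<exists>\<sigma>. bij \<sigma> \<and> (\<forall>p. \<sigma> p \<in> P \<longleftrightarrow> p \<in> P) \<and> (\<forall>p. \<sigma> p \<in> S1 \<longleftrightarrow> p \<in> S2)"
proof -
  have f1: "finite S1" "finite S2" using P S1 S2 finite_subset by auto
  obtain f1 where b1: "bij_betw f1 S2 S1" using finite_same_card_bij[OF f1(2) f1(1)] c by metis
  have "card (P - S2) = card (P - S1)" using card_Diff_subset[OF f1(1) S1] card_Diff_subset[OF f1(2) S2] c by simp
  then obtain f2 where b2: "bij_betw f2 (P - S2) (P - S1)" using finite_same_card_bij P by (metis finite_Diff)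
  define \<sigma> where "\<sigma> p = (if p \<in> S2 then f1 p else if p \<in> P then f2 p else p)" for p
  have c1: "bij_betw \<sigma> S2 S1" using b1 by (rule bij_betw_cong[THEN iffD1, rotated]) (auto simp: \<sigma>_def)
  have c2: "bij_betw \<sigma> (P - S2) (P - S1)" using b2 by (rule bij_betw_cong[THEN iffD1, rotated]) (auto simp: \<sigma>_def)
  have c3: "bij_betw \<sigma> (- P) (- P)" using S2 by (auto simp: \<sigma>_def bij_betw_def inj_on_def image_def)
  have "bij_betw \<sigma> ((S2 \<union> (P - S2)) \<union> - P) ((S1 \<union> (P - S1)) \<union> - P)"
    using S1 by (intro bij_betw_combine[OF bij_betw_combine[OF c1 c2] c3]) auto
  moreover have "(S2 \<union> (P - S2)) \<union> - P = UNIV" "(S1 \<union> (P - S1)) \<union> - P = UNIV" by auto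
  ultimately have bs: "bij \<sigma>" by simp
  have "\<sigma> p \<in> P \<longleftrightarrow> p \<in> P" for p
    using c1 c2 S1 S2 unfolding bij_betw_def \<sigma>_def by (auto split: if_splits)
  moreover have "\<sigma> p \<in> S1 \<longleftrightarrow> p \<in> S2" for p
  proof
    assume "p \<in> S2" thus "\<sigma> p \<in> S1" using c1 by (auto simp: bij_betw_def)
  next
    assume a: "\<sigma> p \<in> S1"
    then obtain q where "q \<in> S2" "\<sigma> q = \<sigma> p" using c1 by (auto simp: bij_betw_def)
    thus "p \<in> S2" using bs by (metis bij_pointE)
  qed
  ultimately show ?thesis using bs by blast
qed

lemma supp_subset_P: "x \<in> carrier (ut_grp n) \<Longrightarrow> supp x \<subseteq> Pn n"
  by (simp add: ut_grp_def ut_carrier_supp)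

theorem proposition3p4:
  fixes w :: "nat \<Rightarrow> nat" and n :: nat
  assumes "w permutes {1..n}"
  shows "((ut_grp n :: ('a::{field,finite}) mat monoid) Mod ut_w n (Hilbert_Choice.inv w))
           \<cong> ((ut_grp n :: 'a mat monoid) Mod ut_w n w)"
proof -
  let ?G = "ut_grp n :: 'a mat monoid"
  let ?H1 = "ut_w n (Hilbert_Choice.inv w) :: 'a mat set"
  let ?H2 = "ut_w n w :: 'a mat set"
  interpret G: comm_group ?G by (rule ut_comm_group)
  have sub2: "subgroup ?H2 ?G" by (rule ut_w_subgroup)
  interpret N: normal ?H2 ?G by (rule G.subgroup_imp_normal[OF sub2])
  have finP: "finite (Pn n)"
    by (rule finite_subset[of _ "{1..n} \<times> {1..n}"]) (auto simp: Pn_def)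
  have "\<exists>\<sigma>. bij \<sigma> \<and> (\<forall>p. \<sigma> p \<in> Pn n \<longleftrightarrow> p \<in> Pn n) \<and> (\<forall>p. \<sigma> p \<in> Sw n (Hilbert_Choice.inv w) \<longleftrightarrow> p \<in> Sw n w)"
    by (rule exists_perm_sets[OF finP _ _ card_Sw_inv[OF assms]]) (auto simp: Sw_def Pn_def)
  then obtain \<sigma> where bs: "bij \<sigma>" and sP: "\<And>p. \<sigma> p \<in> Pn n \<longleftrightarrow> p \<in> Pn n"
      and sS: "\<And>p. \<sigma> p \<in> Sw n (Hilbert_Choice.inv w) \<longleftrightarrow> p \<in> Sw n w"
    by blast
  define \<phi> :: "'a mat \<Rightarrow> 'a mat" where "\<phi> x = (\<lambda>i j. x (fst (\<sigma> (i,j))) (snd (\<sigma> (i,j))))" for x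
  have supp_phi: "supp (\<phi> x) = \<sigma> -` supp x" for x
    by (auto simp: supp_def \<phi>_def split: prod.splits)
  have phi_carr: "\<phi> x \<in> carrier ?G" if "x \<in> carrier ?G" for x
  proof -
    have "supp x \<subseteq> Pn n" using that by (simp add: ut_grp_def ut_carrier_supp)
    hence "\<sigma> -` supp x \<subseteq> Pn n" using sP by blast
    thus ?thesis by (simp add: ut_grp_def ut_carrier_supp supp_phi)
  qed
  have phi_mult: "\<phi> (x \<otimes>\<^bsub>?G\<^esub> y) = \<phi> x \<otimes>\<^bsub>?G\<^esub> \<phi> y" for x y
    by (simp add: ut_grp_def \<phi>_def)
  define h where "h x = ?H2 #>\<^bsub>?G\<^esub> \<phi> x" for x
  have hom: "h \<in> hom ?G (?G Mod ?H2)"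
    using N.r_coset_hom_Mod phi_carr phi_mult G.m_closed
    unfolding hom_def h_def by (auto simp: Pi_def)
  interpret GH: group_hom ?G "?G Mod ?H2" h
    by (rule group_hom.intro[OF G.is_group N.factorgroup_is_group]) (simp add: group_hom_axioms_def hom)
  have onto: "h ` carrier ?G = carrier (?G Mod ?H2)"
  proof
    show "h ` carrier ?G \<subseteq> carrier (?G Mod ?H2)" using hom by (auto simp: hom_def)
    show "carrier (?G Mod ?H2) \<subseteq> h ` carrier ?G"
    proof
      fix X assume "X \<in> carrier (?G Mod ?H2)"
      then obtain a where a: "a \<in> carrier ?G" "X = ?H2 #>\<^bsub>?G\<^esub> a"
        by (auto simp: FactGroup_def RCOSETS_def)
      define x :: "'a mat" where "x = (\<lambda>i j. a (fst (Hilbert_Choice.inv \<sigma> (i,j))) (snd (Hilbert_Choice.inv \<sigma> (i,j))))"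
      have "\<phi> x = a" by (simp add: x_def \<phi>_def bij_inv_eq_iff[OF bs] inv_f_f[OF bij_is_inj[OF bs]])
      moreover have "x \<in> carrier ?G"
      proof -
        have "supp x = Hilbert_Choice.inv \<sigma> -` supp a" by (auto simp: supp_def x_def split: prod.splits)
        moreover have "Hilbert_Choice.inv \<sigma> p \<in> Pn n \<longleftrightarrow> p \<in> Pn n" for p
          using sP[of "Hilbert_Choice.inv \<sigma> p"] by (simp add: bij_inv_eq_iff[OF bs] surj_f_inv_f[OF bij_is_surj[OF bs]])
        ultimately show ?thesis using a(1) by (auto simp: ut_grp_def ut_carrier_supp)
      qed
      ultimately show "X \<in> h ` carrier ?G" using a by (auto simp: h_def)
    qed
  qed
  have ker: "kernel ?G (?G Mod ?H2) h = ?H1"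
  proof -
    have "h x = ?H2 \<longleftrightarrow> \<phi> x \<in> ?H2" if "x \<in> carrier ?G" for x
    proof
      assume "h x = ?H2"
      moreover have "\<phi> x \<in> ?H2 #>\<^bsub>?G\<^esub> \<phi> x"
        by (rule G.rcos_self[OF phi_carr[OF that] sub2])
      ultimately show "\<phi> x \<in> ?H2" by (simp add: h_def)
    next
      assume "\<phi> x \<in> ?H2" thus "h x = ?H2" by (simp add: h_def subgroup.rcos_const[OF sub2])
    qed
    moreover have "\<phi> x \<in> ?H2 \<longleftrightarrow> x \<in> ?H1" for x
    proof -
      have "\<phi> x \<in> ?H2 \<longleftrightarrow> \<sigma> -` supp x \<subseteq> Sw n w" by (simp add: ut_w_supp supp_phi)
      also have "\<dots> \<longleftrightarrow> supp x \<subseteq> Sw n (Hilbert_Choice.inv w)"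
      proof
        assume A: "\<sigma> -` supp x \<subseteq> Sw n w"
        show "supp x \<subseteq> Sw n (Hilbert_Choice.inv w)"
        proof
          fix p assume "p \<in> supp x"
          obtain q where q: "p = \<sigma> q" using bs by (metis bij_pointE)
          thus "p \<in> Sw n (Hilbert_Choice.inv w)" using A \<open>p \<in> supp x\<close> sS by auto
        qed
      next
        assume B: "supp x \<subseteq> Sw n (Hilbert_Choice.inv w)"
        show "\<sigma> -` supp x \<subseteq> Sw n w"
        proof
          fix p assume "p \<in> \<sigma> -` supp x"
          hence "\<sigma> p \<in> Sw n (Hilbert_Choice.inv w)" using B by blast
          thus "p \<in> Sw n w" using sS by blast
        qed
      qed
      also have "\<dots> \<longleftrightarrow> x \<in> ?H1" by (simp add: ut_w_supp)
      finally show ?thesis .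
    qed
    moreover have "?H1 \<subseteq> carrier ?G" using ut_w_subgroup[of n "Hilbert_Choice.inv w"]
      by (rule subgroup.subset)
    ultimately show ?thesis unfolding kernel_def by (auto simp: FactGroup_def)
  qed
  show ?thesis using GH.FactGroup_iso[OF onto] unfolding ker .
qed

end
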